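(* Let $f:\mathcal{X}\to\Delta^{k-1}$ be a classifier outputting confidence vectors. Let $P_S$ and $P_T$ be source and target distributions over $\mathcal{X}\times\mathcal{Y}$ with $k$ classes, and write $P_S(y)$, $P_T(y)$ for the source and target label distributions, viewed as distributions over one-hot vectors $\{0,1\}^k\cap\Delta^{k-1}$. Let $f_\# P_T(c)$ be the distribution of $f(x)$ for $x\sim P_T(x)$, and let $P_{\mathrm{pseudo}}(y)$ be the distribution of the one-hot vector $e_{\arg\max_j f_j(x)}$ for $x\sim P_T(x)$. Define $\hat\epsilon_{\mathrm{COT}}=W_\infty\bigl(f_\# P_T(c),P_S(y)\bigr)$. Then $$\hat\epsilon_{\mathrm{COT}}\ \ge\ 0.5\,W_\infty\bigl(P_{\mathrm{pseudo}}(y),P_T(y)\bigr)-W_\infty\bigl(P_S(y),P_T(y)\bigr).$$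
   Context: $\Delta^{k-1}=\{c\in\mathbb{R}^k: c_j\ge 0,\ \sum_j c_j=1\}$; $e_i$ is the $i$-th standard basis vector. For probability distributions $P,Q$ on $\mathbb{R}^k$, $W_\infty(P,Q)=\inf_{\pi\in\Pi(P,Q)}\int\|u-v\|_\infty\,d\pi(u,v)$ over couplings $\pi$ of $P$ and $Q$ (optimal transport distance with ground cost $\|u-v\|_\infty$). Ties in $\arg\max$ are broken by a fixed rule (e.g. smallest index). No assumption $P_S(y)=P_T(y)$ is made. *)

theory Defs
  imports "HOL-Probability.Probability"
begin

definition prob_simplex :: "(real ^ 'k::finite) set" where
  "prob_simplex = {c. (\<forall>j. c $ j \<ge> 0) \<and> (\<Sum>j\<in>UNIV. c $ j) = 1}"

definition linf_dist :: "real ^ 'k::finite \<Rightarrow> real ^ 'k \<Rightarrow> real" where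
  "linf_dist u v = (MAX i\<in>UNIV. \<bar>u $ i - v $ i\<bar>)"

definition onehot :: "'k::finite \<Rightarrow> real ^ 'k" where
  "onehot i = axis i 1"

definition argmax_idx :: "real ^ 'k::{finite,wellorder} \<Rightarrow> 'k" where
  "argmax_idx c = (LEAST j. \<forall>i. c $ i \<le> c $ j)"

definition couplings :: "'a measure \<Rightarrow> 'b measure \<Rightarrow> ('a \<times> 'b) measure set" where
  "couplings P Q = {\<pi>. prob_space \<pi> \<and> sets \<pi> = sets (P \<Otimes>\<^sub>M Q)
      \<and> distr \<pi> P fst = P \<and> distr \<pi> Q snd = Q}"

definition W_inf :: "(real ^ 'k::finite) measure \<Rightarrow> (real ^ 'k) measure \<Rightarrow> real" where
  "W_inf P Q = enn2real (INF \<pi>\<in>couplings P Q.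
      \<integral>\<^sup>+ z. ennreal (linf_dist (fst z) (snd z)) \<partial>\<pi>)"

end

theory Submission
  imports Defs
begin


lemma onehot_nth: "onehot i $ j = (if j = i then 1 else 0)"
  by (simp add: onehot_def axis_def)

lemma onehot_inj: "onehot i = onehot j \<longleftrightarrow> i = j"
  by (metis onehot_nth vec_eq_iff zero_neq_one)

lemma linf_dist_ge: "\<bar>u $ i - v $ i\<bar> \<le> linf_dist u v"
  unfolding linf_dist_def by (rule Max_ge) auto

lemma linf_dist_le: "(\<And>i. \<bar>u $ i - v $ i\<bar> \<le> c) \<Longrightarrow> linf_dist u v \<le> c"
  unfolding linf_dist_def by (subst Max_le_iff) auto

lemma simplex_le1: "c \<in> prob_simplex \<Longrightarrow> c $ i \<le> 1"
proof -
  assume c: "c \<in> prob_simplex"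
  have "c $ i \<le> (\<Sum>j\<in>UNIV. c $ j)"
    by (rule member_le_sum) (use c in \<open>auto simp: prob_simplex_def\<close>)
  with c show ?thesis by (simp add: prob_simplex_def)
qed

lemma simplex_ge0: "c \<in> prob_simplex \<Longrightarrow> 0 \<le> c $ i"
  by (simp add: prob_simplex_def)

lemma onehot_simplex: "onehot i \<in> prob_simplex"
  by (simp add: prob_simplex_def onehot_nth)

lemma simplex_dist_le1: assumes "u \<in> prob_simplex" "v \<in> prob_simplex" shows "linf_dist u v \<le> 1"
proof (rule linf_dist_le)
  fix i
  have "u $ i \<le> 1" "0 \<le> u $ i" "v $ i \<le> 1" "0 \<le> v $ i"
    using assms by (auto intro: simplex_le1 simplex_ge0)
  then show "\<bar>u $ i - v $ i\<bar> \<le> 1" by linarith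
qed

lemma linf_dist_nonneg: "0 \<le> linf_dist u v"
  using linf_dist_ge[of u _ v] by (meson abs_ge_zero order_trans)

lemma onehot_dist: "i \<noteq> j \<Longrightarrow> linf_dist (onehot i) (onehot j) = 1"
  apply (rule antisym)
  apply (rule simplex_dist_le1; rule onehot_simplex)
  using linf_dist_ge[of "onehot i" i "onehot j"] by (simp add: onehot_nth)

lemma argmax_iff: "argmax_idx c = i \<longleftrightarrow> (\<forall>j. c $ j \<le> c $ i) \<and> (\<forall>j<i. c $ j < c $ i)"
proof -
  have ex: "\<exists>j. \<forall>i. c $ i \<le> c $ j"
  proof -
    obtain j where "c $ j = (MAX i\<in>UNIV. c $ i)"
      using Max_in[of "range (\<lambda>i. c $ i)"] by fastforce
    then show ?thesis by (intro exI[of _ j] allI) simp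
  qed
  show ?thesis
  proof
    assume a: "argmax_idx c = i"
    have 1: "\<forall>j. c $ j \<le> c $ i" using LeastI_ex[OF ex] a by (simp add: argmax_idx_def)
    have "\<forall>j<i. c $ j < c $ i"
    proof (intro allI impI)
      fix j assume "j < i"
      then have "\<not> (\<forall>l. c $ l \<le> c $ j)" using not_less_Least[of j "\<lambda>j. \<forall>i. c $ i \<le> c $ j"] a
        unfolding argmax_idx_def by blast
      then obtain l where "\<not> c $ l \<le> c $ j" by blast
      then show "c $ j < c $ i" using 1[rule_format, of l] by linarith
    qed
    with 1 show "(\<forall>j. c $ j \<le> c $ i) \<and> (\<forall>j<i. c $ j < c $ i)" by blast
  next
    assume a: "(\<forall>j. c $ j \<le> c $ i) \<and> (\<forall>j<i. c $ j < c $ i)"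
    show "argmax_idx c = i" unfolding argmax_idx_def
    proof (rule Least_equality)
      show "\<forall>l. c $ l \<le> c $ i" using a by blast
      fix y assume "\<forall>l. c $ l \<le> c $ y"
      then have "c $ i \<le> c $ y" by blast
      then show "i \<le> y" using a by (metis not_le less_le_not_le)
    qed
  qed
qed

lemma argmax_dist: assumes "a \<in> prob_simplex" "argmax_idx a = i" "i \<noteq> j"
  shows "1/2 \<le> linf_dist a (onehot j)"
proof -
  have le: "a $ j \<le> a $ i" using assms argmax_iff by blast
  have "a $ i + a $ j \<le> (\<Sum>l\<in>UNIV. a $ l)"
  proof -
    have "(\<Sum>l\<in>{i,j}. a $ l) \<le> (\<Sum>l\<in>UNIV. a $ l)"
      by (rule sum_mono2) (use assms in \<open>auto simp: prob_simplex_def\<close>)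
    with assms(3) show ?thesis by simp
  qed
  then have "a $ j \<le> 1/2" using le assms(1) by (simp add: prob_simplex_def)
  moreover have "\<bar>a $ j - onehot j $ j\<bar> \<le> linf_dist a (onehot j)" by (rule linf_dist_ge)
  ultimately show ?thesis by (simp add: onehot_nth)
qed

lemma cont_nth: "continuous_on UNIV (\<lambda>c::real^'k::finite. c $ j)"
  by (rule linear_continuous_on[OF bounded_linear_vec_nth])

lemma simplex_borel: "prob_simplex \<in> sets (borel :: (real ^ 'k::finite) measure)"
proof -
  have "closed {c::real^'k. \<forall>j. 0 \<le> c $ j}"
    by (intro closed_Collect_all closed_Collect_le continuous_on_const cont_nth)
  moreover have "closed {c::real^'k. (\<Sum>j\<in>UNIV. c $ j) = 1}"
    by (intro closed_Collect_eq continuous_on_const continuous_on_sum cont_nth)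
  ultimately have "closed (prob_simplex :: (real^'k) set)"
    unfolding prob_simplex_def by (simp add: Collect_conj_eq closed_Int)
  then show ?thesis by (rule borel_closed)
qed

lemma argmax_borel: "{c::real^'k::{finite,wellorder}. argmax_idx c = i} \<in> sets borel"
proof -
  have "closed {c. \<forall>j. c $ j \<le> (c $ i :: real)}"
    by (intro closed_Collect_all closed_Collect_le cont_nth)
  moreover have "open (\<Inter>j\<in>{..<i}. {c. c $ j < (c $ i :: real)})"
    by (intro open_INT finite ballI open_Collect_less cont_nth)
  ultimately have "{c. \<forall>j. c $ j \<le> (c $ i::real)} \<inter> (\<Inter>j\<in>{..<i}. {c. c $ j < (c $ i::real)}) \<in> sets borel"
    by (intro sets.Int borel_closed borel_open)
  moreover have "{c. argmax_idx c = i} = {c. \<forall>j. c $ j \<le> (c $ i::real)} \<inter> (\<Inter>j\<in>{..<i}. {c. c $ j < (c $ i::real)})"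
    by (rule set_eqI) (simp only: mem_Collect_eq argmax_iff Int_iff INT_iff lessThan_iff, blast)
  ultimately show ?thesis by simp
qed

lemma argmax_measurable: "(argmax_idx :: real^'k::{finite,wellorder} \<Rightarrow> _) \<in> measurable borel (count_space UNIV)"
proof (subst measurable_count_space_eq2_countable, intro conjI ballI)
  show "(argmax_idx :: real^('k::{finite,wellorder}) \<Rightarrow> _) \<in> space borel \<rightarrow> UNIV" by simp
  fix a :: "'k::{finite,wellorder}"
  have eq: "argmax_idx -` {a} \<inter> space borel = {c::real^('k::{finite,wellorder}). argmax_idx c = a}" by auto
  show "argmax_idx -` {a} \<inter> space borel \<in> sets (borel :: (real^('k::{finite,wellorder})) measure)"
    unfolding eq by (rule argmax_borel)
qed



definition tv :: "(real^'k::finite) measure \<Rightarrow> (real^'k) measure \<Rightarrow> real" where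
  "tv M N = (\<Sum>i\<in>UNIV. max 0 (measure M {onehot i} - measure N {onehot i}))"

lemma OH_finite: "finite (range (onehot :: 'k::finite \<Rightarrow> real^'k))"
  by simp

lemma OH_sets: "S \<subseteq> range (onehot :: 'k::finite \<Rightarrow> real^'k) \<Longrightarrow> S \<in> sets borel"
  by (rule borel_closed[OF finite_imp_closed]) (rule finite_subset[OF _ OH_finite])

lemma coupling_facts:
  fixes M N :: "'a::topological_space measure"
  assumes pi: "\<pi> \<in> couplings M N" and sM: "sets M = sets borel" and sN: "sets N = sets borel"
  shows "prob_space \<pi>" "sets \<pi> = sets (borel \<Otimes>\<^sub>M borel)" "space \<pi> = UNIV"
    "fst \<in> measurable \<pi> M" "snd \<in> measurable \<pi> N"
    "\<And>A. A \<in> sets borel \<Longrightarrow> measure M A = measure \<pi> (A \<times> UNIV)"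
    "\<And>A. A \<in> sets borel \<Longrightarrow> measure N A = measure \<pi> (UNIV \<times> A)"
    "prob_space M" "prob_space N"
proof -
  show ps: "prob_space \<pi>" using pi by (simp add: couplings_def)
  have s: "sets \<pi> = sets (M \<Otimes>\<^sub>M N)" using pi by (simp add: couplings_def)
  also have "\<dots> = sets (borel \<Otimes>\<^sub>M borel)" by (rule sets_pair_measure_cong[OF sM sN])
  finally show s2: "sets \<pi> = sets (borel \<Otimes>\<^sub>M borel)" .
  show sp: "space \<pi> = UNIV"
    using sets_eq_imp_space_eq[OF s2] by (simp add: space_pair_measure)
  show mf: "fst \<in> measurable \<pi> M"
    using measurable_cong_sets[OF s refl] measurable_fst by blast
  show ms: "snd \<in> measurable \<pi> N"
    using measurable_cong_sets[OF s refl] measurable_snd by blast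
  have dM: "distr \<pi> M fst = M" and dN: "distr \<pi> N snd = N" using pi by (auto simp: couplings_def)
  show "prob_space M" using prob_space.prob_space_distr[OF ps mf] dM by simp
  show "prob_space N" using prob_space.prob_space_distr[OF ps ms] dN by simp
  fix A :: "'a set" assume A: "A \<in> sets borel"
  show "measure M A = measure \<pi> (A \<times> UNIV)"
  proof -
    have "measure M A = measure (distr \<pi> M fst) A" using dM by simp
    also have "\<dots> = measure \<pi> (fst -` A \<inter> space \<pi>)"
      by (rule measure_distr[OF mf]) (simp add: sM A)
    also have "fst -` A \<inter> space \<pi> = A \<times> UNIV" using sp by auto
    finally show ?thesis .
  qed
  show "measure N A = measure \<pi> (UNIV \<times> A)"
  proof -
    have "measure N A = measure (distr \<pi> N snd) A" using dN by simp
    also have "\<dots> = measure \<pi> (snd -` A \<inter> space \<pi>)"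
      by (rule measure_distr[OF ms]) (simp add: sN A)
    also have "snd -` A \<inter> space \<pi> = UNIV \<times> A" using sp by auto
    finally show ?thesis .
  qed
qed

lemma LB:
  fixes M N :: "(real^'k::finite) measure" and R :: "'k \<Rightarrow> (real^'k) set"
  assumes pi: "\<pi> \<in> couplings M N" and sM: "sets M = sets borel" and sN: "sets N = sets borel"
    and NOH: "measure N (range onehot) = 1"
    and R: "\<And>i. R i \<in> sets borel" and disj: "disjoint_family R"
    and dist: "\<And>i j a. i \<noteq> j \<Longrightarrow> a \<in> R i \<Longrightarrow> \<delta> \<le> linf_dist a (onehot j)"
    and \<delta>: "0 \<le> \<delta>"
  shows "ennreal (\<delta> * (\<Sum>i\<in>UNIV. max 0 (measure M (R i) - measure N {onehot i})))
     \<le> (\<integral>\<^sup>+ z. ennreal (linf_dist (fst z) (snd z)) \<partial>\<pi>)"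
proof -
  note cf = coupling_facts[OF pi sM sN]
  interpret prob_space \<pi> by (rule cf(1))
  interpret N: prob_space N by (rule cf(9))
  define OH where "OH = range (onehot :: 'k \<Rightarrow> real^'k)"
  define D where "D i = R i \<times> (OH - {onehot i})" for i
  have Dsets: "D i \<in> sets \<pi>" for i
    unfolding D_def cf(2) by (intro pair_measureI R OH_sets) (auto simp: OH_def)
  have Dsets': "(\<Union>i. D i) \<in> sets \<pi>" using Dsets by auto
  have pw: "ennreal \<delta> * indicator (\<Union>i. D i) z \<le> ennreal (linf_dist (fst z) (snd z))" for z
  proof (cases "z \<in> (\<Union>i. D i)")
    case True
    then obtain i j a where z: "z = (a, onehot j)" "a \<in> R i" "j \<noteq> i"
      by (auto simp: D_def OH_def)
    have "indicator (\<Union>i. D i) z = (1::ennreal)" using True by simp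
    then show ?thesis using dist[of i j a] z by (simp add: ennreal_leI)
  qed simp
  have I1: "(\<integral>\<^sup>+ z. ennreal \<delta> * indicator (\<Union>i. D i) z \<partial>\<pi>) \<le> (\<integral>\<^sup>+ z. ennreal (linf_dist (fst z) (snd z)) \<partial>\<pi>)"
    by (rule nn_integral_mono) (rule pw)
  have I2: "(\<integral>\<^sup>+ z. ennreal \<delta> * indicator (\<Union>i. D i) z \<partial>\<pi>) = ennreal \<delta> * emeasure \<pi> (\<Union>i. D i)"
    by (rule nn_integral_cmult_indicator[OF Dsets'])
  have I3: "emeasure \<pi> (\<Union>i. D i) = ennreal (\<Sum>i\<in>UNIV. measure \<pi> (D i))"
  proof -
    have "measure \<pi> (\<Union>i\<in>UNIV. D i) = (\<Sum>i\<in>UNIV. measure \<pi> (D i))"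
    proof (rule finite_measure_finite_Union)
      show "disjoint_family_on D UNIV"
        using disj unfolding disjoint_family_on_def D_def by blast
    qed (use Dsets in auto)
    then show ?thesis using emeasure_eq_measure by simp
  qed
  have "max 0 (measure M (R i) - measure N {onehot i}) \<le> measure \<pi> (D i)" for i
  proof -
    have m1: "measure M (R i) = measure \<pi> (R i \<times> UNIV)" by (rule cf(6)[OF R])
    have m2: "measure N {onehot i} = measure \<pi> (UNIV \<times> {onehot i})" by (rule cf(7)) simp
    have OHs: "OH \<in> sets borel" unfolding OH_def by (rule OH_sets) simp
    have "measure N (UNIV - OH) = measure N UNIV - measure N OH"
      by (rule N.finite_measure_Diff) (use OHs sN in \<open>auto simp: sets_eq_imp_space_eq[OF sN]\<close>)
    then have "measure N (UNIV - OH) = 0" using NOH N.prob_space sets_eq_imp_space_eq[OF sN]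
      by (simp add: OH_def)
    then have m3: "measure \<pi> (UNIV \<times> (UNIV - OH)) = 0"
      using cf(7)[of "UNIV - OH"] OHs by auto
    have s1: "UNIV \<times> (UNIV - OH) \<in> sets \<pi>" "UNIV \<times> {onehot i} \<in> sets \<pi>" "R i \<times> UNIV \<in> sets \<pi>"
      unfolding cf(2) using OHs R by (auto intro!: pair_measureI)
    have "measure \<pi> (R i \<times> UNIV) \<le> measure \<pi> (D i \<union> (UNIV \<times> (UNIV - OH)) \<union> (UNIV \<times> {onehot i}))"
      by (rule finite_measure_mono) (use Dsets s1 in \<open>auto simp: D_def\<close>)
    also have "\<dots> \<le> measure \<pi> (D i \<union> (UNIV \<times> (UNIV - OH))) + measure \<pi> (UNIV \<times> {onehot i})"
      by (rule measure_subadditive) (use Dsets s1 in \<open>auto simp: emeasure_eq_measure\<close>)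
    also have "\<dots> \<le> measure \<pi> (D i) + measure \<pi> (UNIV \<times> (UNIV - OH)) + measure \<pi> (UNIV \<times> {onehot i})"
      using measure_subadditive[OF Dsets s1(1)] by (simp add: emeasure_eq_measure)
    finally show ?thesis using m1 m2 m3 by simp
  qed
  then have sm: "(\<Sum>i\<in>UNIV. max 0 (measure M (R i) - measure N {onehot i})) \<le> (\<Sum>i\<in>UNIV. measure \<pi> (D i))"
    by (rule sum_mono)
  have I4: "ennreal (\<delta> * (\<Sum>i\<in>UNIV. max 0 (measure M (R i) - measure N {onehot i})))
      \<le> ennreal \<delta> * ennreal (\<Sum>i\<in>UNIV. measure \<pi> (D i))"
  proof -
    have "ennreal (\<delta> * (\<Sum>i\<in>UNIV. max 0 (measure M (R i) - measure N {onehot i})))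
      \<le> ennreal (\<delta> * (\<Sum>i\<in>UNIV. measure \<pi> (D i)))"
      by (rule ennreal_leI) (rule mult_left_mono[OF sm \<delta>])
    also have "\<dots> = ennreal \<delta> * ennreal (\<Sum>i\<in>UNIV. measure \<pi> (D i))"
      by (rule ennreal_mult) (use \<delta> in \<open>auto intro: sum_nonneg\<close>)
    finally show ?thesis .
  qed
  show ?thesis using I4 I1 unfolding I2 I3 by (rule order_trans)
qed



lemma distr_pair_snd':
  assumes M: "prob_space M" and N: "prob_space N"
  shows "distr (M \<Otimes>\<^sub>M N) N snd = N"
proof (intro measure_eqI)
  interpret M: prob_space M by (rule M)
  interpret N: prob_space N by (rule N)
  fix A assume A: "A \<in> sets (distr (M \<Otimes>\<^sub>M N) N snd)"
  then have A': "A \<in> sets N" by simp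
  from A have "emeasure (distr (M \<Otimes>\<^sub>M N) N snd) A = emeasure (M \<Otimes>\<^sub>M N) (space M \<times> A)"
    by (auto simp add: emeasure_distr space_pair_measure dest: sets.sets_into_space intro!: arg_cong2[where f=emeasure])
  also have "\<dots> = emeasure M (space M) * emeasure N A"
    by (rule N.emeasure_pair_measure_Times[OF sets.top A'])
  finally show "emeasure (distr (M \<Otimes>\<^sub>M N) N snd) A = emeasure N A"
    by (simp add: M.emeasure_space_1)
qed simp

lemma FIN:
  fixes M N :: "(real^'k::finite) measure"
  assumes M: "prob_space M" and N: "prob_space N" and sM: "sets M = sets borel" and sN: "sets N = sets borel"
    and SM: "measure M prob_simplex = 1" and SN: "measure N prob_simplex = 1"
  shows "(INF \<pi>\<in>couplings M N. \<integral>\<^sup>+ z. ennreal (linf_dist (fst z) (snd z)) \<partial>\<pi>) \<le> 1"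
proof -
  interpret M: prob_space M by (rule M)
  interpret N: prob_space N by (rule N)
  interpret P: prob_space "M \<Otimes>\<^sub>M N" by (rule prob_space_pair[OF M N])
  have cp: "M \<Otimes>\<^sub>M N \<in> couplings M N"
    unfolding couplings_def
    using prob_space_pair[OF M N] N.distr_pair_fst distr_pair_snd'[OF M N] by simp
  have Ss: "prob_simplex \<in> sets M" "prob_simplex \<in> sets N" using simplex_borel sM sN by auto
  have "emeasure (M \<Otimes>\<^sub>M N) (prob_simplex \<times> prob_simplex) = emeasure M prob_simplex * emeasure N prob_simplex"
    by (rule N.emeasure_pair_measure_Times[OF Ss])
  also have "\<dots> = 1" using SM SN by (simp add: M.emeasure_eq_measure N.emeasure_eq_measure)
  finally have "P.prob (prob_simplex \<times> prob_simplex) = 1" by (simp add: P.emeasure_eq_measure)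
  then have ae: "AE z in M \<Otimes>\<^sub>M N. z \<in> prob_simplex \<times> prob_simplex" by (rule P.AE_prob_1)
  have "(\<integral>\<^sup>+ z. ennreal (linf_dist (fst z) (snd z)) \<partial>(M \<Otimes>\<^sub>M N)) \<le> (\<integral>\<^sup>+ z. 1 \<partial>(M \<Otimes>\<^sub>M N))"
    by (rule nn_integral_mono_AE) (use ae in \<open>eventually_elim, auto intro: simplex_dist_le1\<close>)
  also have "\<dots> = 1" by (simp add: P.emeasure_space_1)
  finally have "(\<integral>\<^sup>+ z. ennreal (linf_dist (fst z) (snd z)) \<partial>(M \<Otimes>\<^sub>M N)) \<le> 1" .
  then show ?thesis by (meson INF_lower cp order_trans)
qed



lemma OH_union: "range (onehot :: 'k::finite \<Rightarrow> real^'k) = (\<Union>i. {onehot i})" by auto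

lemma measure_OH_sum:
  fixes N :: "(real^'k::finite) measure"
  assumes N: "prob_space N" and sN: "sets N = sets borel"
  shows "measure N (range onehot) = (\<Sum>i\<in>UNIV. measure N {onehot i})"
proof -
  interpret N: prob_space N by (rule N)
  show ?thesis unfolding OH_union
  proof (rule N.finite_measure_finite_Union)
    show "disjoint_family_on (\<lambda>i. {onehot i :: real^'k}) UNIV"
      by (auto simp: disjoint_family_on_def onehot_inj)
  qed (use sN OH_sets in auto)
qed

lemma EQ:
  fixes N1 N2 :: "(real^'k::finite) measure"
  assumes N1: "prob_space N1" and N2: "prob_space N2" and s1: "sets N1 = sets borel" and s2: "sets N2 = sets borel"
    and O1: "measure N1 (range onehot) = 1" and O2: "measure N2 (range onehot) = 1"
    and eq: "\<And>i. measure N1 {onehot i} = measure N2 {onehot i}"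
  shows "N1 = N2"
proof -
  interpret N1: prob_space N1 by (rule N1)
  interpret N2: prob_space N2 by (rule N2)
  define OH where "OH = range (onehot :: 'k \<Rightarrow> real^'k)"
  have OHs: "OH \<in> sets borel" unfolding OH_def by (rule OH_sets) simp
  have key: "emeasure N A = (\<Sum>i\<in>{i. onehot i \<in> A}. ennreal (measure N {onehot i}))"
    if N: "prob_space N" and sN: "sets N = sets borel" and O: "measure N OH = 1" and A: "A \<in> sets borel"
    for N :: "(real^'k) measure" and A
  proof -
    interpret N: prob_space N by (rule N)
    have sp: "space N = UNIV" using sets_eq_imp_space_eq[OF sN] by simp
    have "measure N (space N - OH) = 1 - measure N OH"
      by (rule N.prob_compl) (simp add: sN OHs)
    then have "UNIV - OH \<in> null_sets N" using O OHs sN sp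
      by (simp add: null_sets_def N.emeasure_eq_measure)
    then have nul: "A - OH \<in> null_sets N"
      by (rule null_sets_subset) (use A OHs sN in auto)
    have "emeasure N A = emeasure N ((A \<inter> OH) \<union> (A - OH))" by (rule arg_cong[where f="emeasure N"]) blast
    also have "\<dots> = emeasure N (A \<inter> OH)"
      by (rule emeasure_Un_null_set[OF _ nul]) (use A OHs sN in auto)
    also have "\<dots> = (\<Sum>x\<in>A \<inter> OH. emeasure N {x})"
      by (rule emeasure_eq_sum_singleton) (auto simp: OH_def sN intro!: OH_sets)
    also have "\<dots> = (\<Sum>i\<in>{i. onehot i \<in> A}. emeasure N {onehot i})"
    proof -
      have "A \<inter> OH = onehot ` {i. onehot i \<in> A}" by (auto simp: OH_def)
      moreover have "inj_on (onehot :: 'k \<Rightarrow> real^'k) {i. onehot i \<in> A}" by (auto simp: inj_on_def onehot_inj)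
      ultimately show ?thesis by (simp add: sum.reindex)
    qed
    also have "\<dots> = (\<Sum>i\<in>{i. onehot i \<in> A}. ennreal (measure N {onehot i}))"
      by (simp add: N.emeasure_eq_measure)
    finally show ?thesis .
  qed
  show ?thesis
  proof (rule measure_eqI)
    show "sets N1 = sets N2" using s1 s2 by simp
    fix A assume "A \<in> sets N1"
    then have A: "A \<in> sets borel" using s1 by simp
    show "emeasure N1 A = emeasure N2 A"
      using key[OF N1 s1 _ A] key[OF N2 s2 _ A] O1 O2 eq by (simp add: OH_def)
  qed
qed



definition tvw :: "('k::finite \<Rightarrow> real) \<Rightarrow> ('k \<Rightarrow> real) \<Rightarrow> real" where
  "tvw p c = (\<Sum>i\<in>UNIV. max 0 (p i - c i))"

definition wt :: "('k::finite \<Rightarrow> real) \<Rightarrow> ('k \<Rightarrow> real) \<Rightarrow> 'k \<times> 'k \<Rightarrow> real" where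
  "wt p c z = (if fst z = snd z then min (p (fst z)) (c (fst z)) else 0)
      + max 0 (p (fst z) - c (fst z)) * max 0 (c (snd z) - p (snd z)) / tvw p c"

lemma tvw_sym:
  fixes p c :: "'k::finite \<Rightarrow> real"
  assumes "sum p UNIV = 1" "sum c UNIV = 1"
  shows "(\<Sum>i\<in>UNIV. max 0 (c i - p i)) = tvw p c"
proof -
  have "(\<Sum>i\<in>UNIV. max 0 (p i - c i)) - (\<Sum>i\<in>UNIV. max 0 (c i - p i)) = (\<Sum>i\<in>UNIV. p i - c i)"
    by (simp add: sum_subtractf[symmetric]) (rule sum.cong, auto)
  also have "\<dots> = 0" using assms by (simp add: sum_subtractf)
  finally show ?thesis by (simp add: tvw_def)
qed

lemma wt_facts:
  fixes p c :: "'k::finite \<Rightarrow> real"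
  assumes p0: "\<And>i. 0 \<le> p i" and c0: "\<And>i. 0 \<le> c i" and sp: "sum p UNIV = 1" and sc: "sum c UNIV = 1"
  shows "\<And>z. 0 \<le> wt p c z"
    and "\<And>i. (\<Sum>j\<in>UNIV. wt p c (i, j)) = p i"
    and "\<And>j. (\<Sum>i\<in>UNIV. wt p c (i, j)) = c j"
    and "(\<Sum>z\<in>UNIV. wt p c z * (if fst z = snd z then 0 else 1)) \<le> tvw p c"
proof -
  let ?T = "tvw p c"
  have T0: "0 \<le> ?T" unfolding tvw_def by (rule sum_nonneg) simp
  have sb: "(\<Sum>i\<in>UNIV. max 0 (c i - p i)) = ?T" by (rule tvw_sym[OF sp sc])
  show nn: "0 \<le> wt p c z" for z
    unfolding wt_def using p0 c0 T0 by (intro add_nonneg_nonneg divide_nonneg_nonneg mult_nonneg_nonneg) auto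
  show "(\<Sum>j\<in>UNIV. wt p c (i, j)) = p i" for i
  proof -
    have "(\<Sum>j\<in>UNIV. wt p c (i, j)) = min (p i) (c i) + max 0 (p i - c i) * (\<Sum>j\<in>UNIV. max 0 (c j - p j)) / ?T"
      unfolding wt_def by (simp add: sum.distrib sum_divide_distrib[symmetric] sum_distrib_left)
    also have "\<dots> = p i"
    proof (cases "?T = 0")
      case True
      then have "max 0 (p i - c i) = 0"
        unfolding tvw_def using sum_nonneg_eq_0_iff[of UNIV "\<lambda>i. max 0 (p i - c i)"] by simp
      then show ?thesis using True by simp
    next
      case False
      then show ?thesis using sb by simp
    qed
    finally show ?thesis .
  qed
  show "(\<Sum>i\<in>UNIV. wt p c (i, j)) = c j" for j
  proof -
    have "(\<Sum>i\<in>UNIV. wt p c (i, j)) = min (p j) (c j) + (\<Sum>i\<in>UNIV. max 0 (p i - c i)) * max 0 (c j - p j) / ?T"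
      unfolding wt_def by (simp add: sum.distrib sum_divide_distrib[symmetric] sum_distrib_right)
    also have "\<dots> = c j"
    proof (cases "?T = 0")
      case True
      then have "max 0 (c j - p j) = 0"
        using sb sum_nonneg_eq_0_iff[of UNIV "\<lambda>i. max 0 (c i - p i)"] by simp
      then show ?thesis using True by simp
    next
      case False
      then show ?thesis by (simp add: tvw_def)
    qed
    finally show ?thesis .
  qed
  show "(\<Sum>z\<in>UNIV. wt p c z * (if fst z = snd z then 0 else 1)) \<le> ?T"
  proof -
    have "(\<Sum>z\<in>UNIV. wt p c z * (if fst z = snd z then 0 else 1))
        \<le> (\<Sum>z\<in>UNIV. max 0 (p (fst z) - c (fst z)) * max 0 (c (snd z) - p (snd z)) / ?T)"
      by (rule sum_mono) (use T0 in \<open>auto simp: wt_def\<close>)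
    also have "\<dots> = (\<Sum>i\<in>UNIV. \<Sum>j\<in>UNIV. max 0 (p i - c i) * max 0 (c j - p j) / ?T)"
      by (simp add: sum.cartesian_product UNIV_Times_UNIV[symmetric] del: UNIV_Times_UNIV) (rule sum.cong, auto)
    also have "\<dots> = ?T * ?T / ?T"
      by (simp add: sum_divide_distrib[symmetric] sum_product[symmetric] sb tvw_def)
    also have "\<dots> \<le> ?T" by simp
    finally show ?thesis .
  qed
qed



lemma linf_dist_self: "linf_dist u u = 0"
  using linf_dist_le[of u u 0] linf_dist_nonneg[of u u] by simp

lemma cost_meas: "(\<lambda>z. ennreal (linf_dist (fst z) (snd z))) \<in> borel_measurable (borel \<Otimes>\<^sub>M (borel :: (real^'k::finite) measure))"
proof -
  have vn: "(\<lambda>x::real^'k. x $ i) \<in> borel_measurable borel" for i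
    by (rule borel_measurable_continuous_onI[OF cont_nth])
  have "(\<lambda>z. \<bar>fst z $ i - snd z $ i\<bar>) \<in> borel_measurable (borel \<Otimes>\<^sub>M (borel :: (real^'k) measure))" for i
    by (intro borel_measurable_abs borel_measurable_diff measurable_compose[OF measurable_fst vn]
        measurable_compose[OF measurable_snd vn])
  then have "(\<lambda>z. Max ((\<lambda>i. \<bar>fst z $ i - snd z $ i\<bar>) ` UNIV)) \<in> borel_measurable (borel \<Otimes>\<^sub>M (borel :: (real^'k) measure))"
    by (intro borel_measurable_Max) auto
  then have "(\<lambda>z. linf_dist (fst z) (snd z)) \<in> borel_measurable (borel \<Otimes>\<^sub>M (borel :: (real^'k) measure))"
    by (simp add: linf_dist_def)
  then show ?thesis by (rule measurable_compose[OF _ measurable_ennreal])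
qed

lemma UB:
  fixes P C :: "(real^'k::finite) measure"
  assumes PP: "prob_space P" and PC: "prob_space C" and sP: "sets P = sets borel" and sC: "sets C = sets borel"
    and OP: "measure P (range onehot) = 1" and OC: "measure C (range onehot) = 1"
  shows "W_inf P C \<le> tv P C"
proof -
  define p where "p i = measure P {onehot i}" for i
  define c where "c i = measure C {onehot i}" for i
  have p0: "0 \<le> p i" and c0: "0 \<le> c i" for i by (simp_all add: p_def c_def)
  have sp: "sum p UNIV = 1" using measure_OH_sum[OF PP sP] OP by (simp add: p_def)
  have sc: "sum c UNIV = 1" using measure_OH_sum[OF PC sC] OC by (simp add: c_def)
  have tvw: "tvw p c = tv P C" by (simp add: tv_def tvw_def p_def c_def)
  note W = wt_facts[OF p0 c0 sp sc]
  define \<gamma>0 where "\<gamma>0 = point_measure UNIV (\<lambda>z. ennreal (wt p c z))"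
  have tot: "(\<Sum>z\<in>UNIV. wt p c z) = 1"
  proof -
    have "(\<Sum>i\<in>UNIV. \<Sum>j\<in>UNIV. wt p c (i, j)) = (\<Sum>z\<in>UNIV \<times> UNIV. wt p c z)"
      by (subst sum.cartesian_product) simp
    then show ?thesis using W(2) sp by simp
  qed
  have ps0: "prob_space \<gamma>0" unfolding \<gamma>0_def
    by (rule prob_space_point_measure) (use W(1) tot in auto)
  have sp0: "space \<gamma>0 = UNIV" by (simp add: \<gamma>0_def space_point_measure)
  have meas0: "measure \<gamma>0 S = (\<Sum>z\<in>S. wt p c z)" for S
  proof -
    have "emeasure \<gamma>0 S = (\<Sum>z\<in>S. ennreal (wt p c z))"
      unfolding \<gamma>0_def by (rule emeasure_point_measure_finite) auto
    also have "\<dots> = ennreal (\<Sum>z\<in>S. wt p c z)" using W(1) by simp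
    finally show ?thesis by (simp add: measure_def sum_nonneg W(1))
  qed
  define h where "h = (\<lambda>z::'k\<times>'k. (onehot (fst z) :: real^'k, onehot (snd z) :: real^'k))"
  have hm: "h \<in> measurable \<gamma>0 (borel \<Otimes>\<^sub>M borel)" by (simp add: \<gamma>0_def space_pair_measure)
  define \<gamma> where "\<gamma> = distr \<gamma>0 (borel \<Otimes>\<^sub>M borel) h"
  have ps: "prob_space \<gamma>" unfolding \<gamma>_def by (rule prob_space.prob_space_distr[OF ps0 hm])
  have m1: "distr \<gamma> P fst = P"
  proof -
    have "distr \<gamma> P fst = distr \<gamma> borel fst" by (rule distr_cong) (simp_all add: sP)
    also have "\<dots> = distr \<gamma>0 borel (fst \<circ> h)" unfolding \<gamma>_def by (rule distr_distr[OF measurable_fst hm])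
    also have "\<dots> = P"
    proof (rule EQ)
      have mm: "fst \<circ> h \<in> measurable \<gamma>0 borel" by (simp add: \<gamma>0_def)
      show "prob_space (distr \<gamma>0 borel (fst \<circ> h))" by (rule prob_space.prob_space_distr[OF ps0 mm])
      show "measure (distr \<gamma>0 borel (fst \<circ> h)) (range onehot) = 1"
        by (subst measure_distr[OF mm]) (simp_all add: OH_sets sp0 h_def meas0 tot vimage_def)
      fix i
      have "measure (distr \<gamma>0 borel (fst \<circ> h)) {onehot i} = measure \<gamma>0 ({i} \<times> UNIV)"
        by (subst measure_distr[OF mm]) (auto simp: sp0 h_def onehot_inj intro!: arg_cong[where f="measure \<gamma>0"])
      also have "\<dots> = p i"
      proof -
        have "(\<Sum>x\<in>{i}. \<Sum>j\<in>UNIV. wt p c (x, j)) = (\<Sum>z\<in>{i} \<times> UNIV. wt p c z)"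
          by (subst sum.cartesian_product) simp
        then show ?thesis using W(2)[of i] by (simp add: meas0)
      qed
      finally show "measure (distr \<gamma>0 borel (fst \<circ> h)) {onehot i} = measure P {onehot i}" by (simp add: p_def)
    qed (simp_all add: PP sP OP)
    finally show ?thesis .
  qed
  have m2: "distr \<gamma> C snd = C"
  proof -
    have "distr \<gamma> C snd = distr \<gamma> borel snd" by (rule distr_cong) (simp_all add: sC)
    also have "\<dots> = distr \<gamma>0 borel (snd \<circ> h)" unfolding \<gamma>_def by (rule distr_distr[OF measurable_snd hm])
    also have "\<dots> = C"
    proof (rule EQ)
      have mm: "snd \<circ> h \<in> measurable \<gamma>0 borel" by (simp add: \<gamma>0_def)
      show "prob_space (distr \<gamma>0 borel (snd \<circ> h))" by (rule prob_space.prob_space_distr[OF ps0 mm])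
      show "measure (distr \<gamma>0 borel (snd \<circ> h)) (range onehot) = 1"
        by (subst measure_distr[OF mm]) (simp_all add: OH_sets sp0 h_def meas0 tot vimage_def)
      fix i
      have "measure (distr \<gamma>0 borel (snd \<circ> h)) {onehot i} = measure \<gamma>0 (UNIV \<times> {i})"
        by (subst measure_distr[OF mm]) (auto simp: sp0 h_def onehot_inj intro!: arg_cong[where f="measure \<gamma>0"])
      also have "\<dots> = c i"
      proof -
        have "(\<Sum>x\<in>UNIV. \<Sum>j\<in>{i}. wt p c (x, j)) = (\<Sum>z\<in>UNIV \<times> {i}. wt p c z)"
          by (subst sum.cartesian_product) simp
        then show ?thesis using W(3)[of i] by (simp add: meas0)
      qed
      finally show "measure (distr \<gamma>0 borel (snd \<circ> h)) {onehot i} = measure C {onehot i}" by (simp add: c_def)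
    qed (simp_all add: PC sC OC)
    finally show ?thesis .
  qed
  have cp: "\<gamma> \<in> couplings P C"
    unfolding couplings_def using ps m1 m2 sets_pair_measure_cong[OF sP sC] by (simp add: \<gamma>_def)
  have "(\<integral>\<^sup>+ z. ennreal (linf_dist (fst z) (snd z)) \<partial>\<gamma>) = (\<integral>\<^sup>+ z. ennreal (linf_dist (fst (h z)) (snd (h z))) \<partial>\<gamma>0)"
    unfolding \<gamma>_def
    by (rule nn_integral_distr[OF hm]) (subst measurable_cong_sets[OF sets_distr refl], rule cost_meas)
  also have "\<dots> = (\<Sum>z\<in>UNIV. ennreal (wt p c z) * ennreal (linf_dist (fst (h z)) (snd (h z))))"
    unfolding \<gamma>0_def by (rule nn_integral_point_measure_finite) simp
  also have "\<dots> = (\<Sum>z\<in>UNIV. ennreal (wt p c z * (if fst z = snd z then 0 else 1)))"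
    by (rule sum.cong) (auto simp: h_def linf_dist_self onehot_dist)
  also have "\<dots> = ennreal (\<Sum>z\<in>UNIV. wt p c z * (if fst z = snd z then 0 else 1))"
    using W(1) by (intro sum_ennreal) simp
  also have "\<dots> \<le> ennreal (tv P C)" using W(4) tvw by (simp add: ennreal_leI)
  finally have le: "(\<integral>\<^sup>+ z. ennreal (linf_dist (fst z) (snd z)) \<partial>\<gamma>) \<le> ennreal (tv P C)" .
  have "W_inf P C \<le> enn2real (ennreal (tv P C))"
    unfolding W_inf_def
  proof (rule enn2real_mono)
    have "(INF \<pi>\<in>couplings P C. \<integral>\<^sup>+ z. ennreal (linf_dist (fst z) (snd z)) \<partial>\<pi>)
        \<le> (\<integral>\<^sup>+ z. ennreal (linf_dist (fst z) (snd z)) \<partial>\<gamma>)" by (rule INF_lower[OF cp])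
    then show "(INF \<pi>\<in>couplings P C. \<integral>\<^sup>+ z. ennreal (linf_dist (fst z) (snd z)) \<partial>\<pi>) \<le> ennreal (tv P C)"
      using le by (rule order_trans)
  qed simp
  also have "\<dots> = tv P C" unfolding tv_def by (rule enn2real_ennreal) (rule sum_nonneg, simp)
  finally show ?thesis .
qed



lemma W_lower:
  fixes M N :: "(real^'k::finite) measure"
  assumes lb: "\<And>\<pi>. \<pi> \<in> couplings M N \<Longrightarrow> ennreal x \<le> (\<integral>\<^sup>+ z. ennreal (linf_dist (fst z) (snd z)) \<partial>\<pi>)"
    and fin: "(INF \<pi>\<in>couplings M N. \<integral>\<^sup>+ z. ennreal (linf_dist (fst z) (snd z)) \<partial>\<pi>) \<le> 1"
    and x: "0 \<le> x"
  shows "x \<le> W_inf M N"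
proof -
  have "ennreal x \<le> (INF \<pi>\<in>couplings M N. \<integral>\<^sup>+ z. ennreal (linf_dist (fst z) (snd z)) \<partial>\<pi>)"
    by (rule INF_greatest) (rule lb)
  then have "enn2real (ennreal x) \<le> enn2real (INF \<pi>\<in>couplings M N. \<integral>\<^sup>+ z. ennreal (linf_dist (fst z) (snd z)) \<partial>\<pi>)"
    by (rule enn2real_mono) (use fin in \<open>auto simp: top_unique le_less_trans\<close>)
  then show ?thesis using x by (simp add: W_inf_def)
qed

lemma tv_nonneg: "0 \<le> tv M N"
  unfolding tv_def by (rule sum_nonneg) simp

lemma tv_tri: "tv P C \<le> tv P B + tv B C"
  unfolding tv_def sum.distrib[symmetric] by (rule sum_mono) linarith

theorem mainTheorem6:
  fixes MX :: "'x measure"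
    and PS PT :: "('x \<times> 'k::{finite,wellorder}) measure"
    and f :: "'x \<Rightarrow> real ^ ('k::{finite,wellorder})"
  assumes "prob_space PS" and "prob_space PT"
    and "sets PS = sets (MX \<Otimes>\<^sub>M count_space UNIV)"
    and "sets PT = sets (MX \<Otimes>\<^sub>M count_space UNIV)"
    and "f \<in> borel_measurable MX"
    and "\<And>x. f x \<in> prob_simplex"
  shows "W_inf (distr PT borel (\<lambda>(x, y). f x)) (distr PS borel (\<lambda>(x, y). onehot y))
         \<ge> 0.5 * W_inf (distr PT borel (\<lambda>(x, y). onehot (argmax_idx (f x))))
                       (distr PT borel (\<lambda>(x, y). onehot y))
           - W_inf (distr PS borel (\<lambda>(x, y). onehot y)) (distr PT borel (\<lambda>(x, y). onehot y))"
proof -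
  note PSp = assms(1) and PTp = assms(2) and sS = assms(3) and sT = assms(4) and fm = assms(5) and fS = assms(6)
  interpret PS: prob_space PS by (rule PSp)
  interpret PT: prob_space PT by (rule PTp)
  define A where "A = distr PT borel (\<lambda>(x, y). f x)"
  define B where "B = distr PS borel (\<lambda>(x, y). onehot y)"
  define C where "C = distr PT borel (\<lambda>(x, y). onehot y)"
  define P where "P = distr PT borel (\<lambda>(x, y). onehot (argmax_idx (f x)))"
  have oh_m: "onehot \<in> measurable (count_space UNIV) borel" by simp
  have e1: "(\<lambda>(x, y). f x) = f \<circ> fst" by auto
  have e2: "(\<lambda>(x, y). onehot y) = onehot \<circ> snd" by auto
  have e3: "(\<lambda>(x, y). onehot (argmax_idx (f x))) = onehot \<circ> argmax_idx \<circ> f \<circ> fst" by auto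
  have mA: "(\<lambda>(x, y). f x) \<in> measurable PT borel"
    unfolding e1 measurable_cong_sets[OF sT refl] by (rule measurable_comp[OF measurable_fst fm])
  have mB: "(\<lambda>(x, y). onehot y) \<in> measurable PS borel"
    unfolding e2 measurable_cong_sets[OF sS refl] by (rule measurable_comp[OF measurable_snd oh_m])
  have mC: "(\<lambda>(x, y). onehot y) \<in> measurable PT borel"
    unfolding e2 measurable_cong_sets[OF sT refl] by (rule measurable_comp[OF measurable_snd oh_m])
  have mP: "(\<lambda>(x, y). onehot (argmax_idx (f x))) \<in> measurable PT borel"
    unfolding e3 measurable_cong_sets[OF sT refl]
    by (intro measurable_comp[OF measurable_fst] measurable_comp[OF fm] measurable_comp[OF argmax_measurable oh_m])
  have pA: "prob_space A" unfolding A_def by (rule PT.prob_space_distr[OF mA])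
  have pB: "prob_space B" unfolding B_def by (rule PS.prob_space_distr[OF mB])
  have pC: "prob_space C" unfolding C_def by (rule PT.prob_space_distr[OF mC])
  have pP: "prob_space P" unfolding P_def by (rule PT.prob_space_distr[OF mP])
  have sA: "sets A = sets borel" and sB: "sets B = sets borel" and sC: "sets C = sets borel" and sP: "sets P = sets borel"
    by (simp_all add: A_def B_def C_def P_def)
  have OHs: "range onehot \<in> sets borel" by (rule OH_sets) simp
  have OB: "measure B (range onehot) = 1"
    unfolding B_def by (subst measure_distr[OF mB]) (auto simp: OHs vimage_def PS.prob_space[symmetric] intro!: arg_cong[where f="measure PS"])
  have OC: "measure C (range onehot) = 1"
    unfolding C_def by (subst measure_distr[OF mC]) (auto simp: OHs vimage_def PT.prob_space[symmetric] intro!: arg_cong[where f="measure PT"])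
  have OP: "measure P (range onehot) = 1"
    unfolding P_def by (subst measure_distr[OF mP]) (auto simp: OHs vimage_def PT.prob_space[symmetric] intro!: arg_cong[where f="measure PT"])
  have SA: "measure A prob_simplex = 1"
    unfolding A_def by (subst measure_distr[OF mA]) (auto simp: simplex_borel fS vimage_def PT.prob_space[symmetric] intro!: arg_cong[where f="measure PT"])
  have SB: "measure B prob_simplex = 1"
    unfolding B_def by (subst measure_distr[OF mB]) (auto simp: simplex_borel onehot_simplex vimage_def PS.prob_space[symmetric] intro!: arg_cong[where f="measure PS"])
  have SC: "measure C prob_simplex = 1"
    unfolding C_def by (subst measure_distr[OF mC]) (auto simp: simplex_borel onehot_simplex vimage_def PT.prob_space[symmetric] intro!: arg_cong[where f="measure PT"])
  define R where "R (i::'k) = prob_simplex \<inter> {c. argmax_idx c = i}" for i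
  have Rs: "R i \<in> sets borel" for i unfolding R_def by (intro sets.Int simplex_borel argmax_borel)
  have RA: "measure A (R i) = measure P {onehot i}" for i
  proof -
    have "measure A (R i) = measure PT ((\<lambda>(x, y). f x) -` R i \<inter> space PT)"
      unfolding A_def by (rule measure_distr[OF mA]) (simp add: Rs)
    also have "(\<lambda>(x, y). f x) -` R i \<inter> space PT = (\<lambda>(x, y). onehot (argmax_idx (f x))) -` {onehot i} \<inter> space PT"
      by (auto simp: R_def fS onehot_inj)
    also have "measure PT \<dots> = measure P {onehot i}"
      unfolding P_def by (rule measure_distr[OF mP, symmetric]) simp
    finally show ?thesis .
  qed
  have tvPB: "(\<Sum>i\<in>UNIV. max 0 (measure A (R i) - measure B {onehot i})) = tv P B"
    by (simp add: tv_def RA)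
  have L1: "1/2 * tv P B \<le> W_inf A B"
  proof (rule W_lower)
    fix \<pi> assume "\<pi> \<in> couplings A B"
    have disjR: "disjoint_family R" by (auto simp: disjoint_family_on_def R_def)
    have distR: "\<And>i j a. i \<noteq> j \<Longrightarrow> a \<in> R i \<Longrightarrow> 1/2 \<le> linf_dist a (onehot j)"
      using argmax_dist by (auto simp: R_def)
    from LB[where R=R and \<delta>="1/2", OF \<open>\<pi> \<in> couplings A B\<close> sA sB OB Rs disjR distR] show "ennreal (1/2 * tv P B) \<le> (\<integral>\<^sup>+ z. ennreal (linf_dist (fst z) (snd z)) \<partial>\<pi>)"
      unfolding tvPB by simp
  qed (use FIN[OF pA pB sA sB SA SB] tv_nonneg in auto)
  have L2: "tv B C \<le> W_inf B C"
  proof (rule W_lower)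
    fix \<pi> assume "\<pi> \<in> couplings B C"
    have disj1: "disjoint_family (\<lambda>i. {onehot i})" by (auto simp: disjoint_family_on_def onehot_inj)
    have dist1: "\<And>i j a. i \<noteq> j \<Longrightarrow> a \<in> {onehot i} \<Longrightarrow> 1 \<le> linf_dist a (onehot j)"
      by (auto simp: onehot_dist)
    have s1: "\<And>i. {onehot i} \<in> sets borel" by (rule OH_sets) auto
    from LB[where R="\<lambda>i. {onehot i}" and \<delta>=1, OF \<open>\<pi> \<in> couplings B C\<close> sB sC OC s1 disj1 dist1] show "ennreal (tv B C) \<le> (\<integral>\<^sup>+ z. ennreal (linf_dist (fst z) (snd z)) \<partial>\<pi>)"
      by (simp add: tv_def)
  qed (use FIN[OF pB pC sB sC SB SC] tv_nonneg in auto)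
  have U: "W_inf P C \<le> tv P C" by (rule UB[OF pP pC sP sC OP OC])
  have T: "tv P C \<le> tv P B + tv B C" by (rule tv_tri)
  have "0.5 * W_inf P C - W_inf B C \<le> W_inf A B"
    using L1 L2 U T tv_nonneg[of B C] by simp
  then show ?thesis unfolding A_def B_def C_def P_def by simp
qed


end
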